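(* Let $(X_{m,t})$ be a random array in $\Omega^{M\times(T+1)}$ whose rows are independent, each row $m$ being a Markov chain with transition matrix $P_m$, and fix $i\in\Omega$. With the notation of the context, the $\mathbb R^{1\times|\Omega|}$-valued process $k\mapsto\bar V_{k,i,:}$, $k=0,\dots,K$, is a martingale with respect to the filtration $(\mathcal F_0,\mathcal F_1,\dots)$, and its increments satisfy $\|\bar U_{k,i,:}\|_2\le\sqrt2$ almost surely for all $k$.
   Context: $\Omega$ finite, $M,T\ge1$, rows $m=1,\dots,M$, columns $t=0,\dots,T$. Write $X^{(i)}_{m,t}=1(X_{m,t}=i)$ and $P_{m,i,j}=P_m(i,j)$. Define $U_{m,0,i,j}=0$ and $U_{m,t,i,j}=X^{(i)}_{m,t-1}(X^{(j)}_{m,t}-P_{m,i,j})$ for $t\ge1$. Let $K=M(T+1)$ and use the bijection $(m,t)\mapsto k=m+tM$ from $\{1,\dots,M\}\times\{0,\dots,T\}$ onto $\{1,\dots,K\}$ (column-stacking vectorisation); set $\bar U_{k,i,j}=U_{m,t,i,j}$ and $\bar X_k=X_{m,t}$ for $k=m+tM$. Let $\bar V_{k,i,j}=\sum_{k'=1}^k\bar U_{k',i,j}$ for $k=0,\dots,K$ (empty sum $=0$), and $\mathcal F_k=\sigma(\bar X_1,\dots,\bar X_k)$. *)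

theory Defs
  imports "HOL-Probability.Probability"
begin

definition markov_chain_row ::
  "'w measure \<Rightarrow> (nat \<Rightarrow> 'w \<Rightarrow> 'a::finite) \<Rightarrow> ('a \<Rightarrow> 'a \<Rightarrow> real) \<Rightarrow> nat \<Rightarrow> bool" where
  "markov_chain_row Ps Y Q T \<longleftrightarrow>
     (\<forall>x y. 0 \<le> Q x y) \<and> (\<forall>x. (\<Sum>y\<in>UNIV. Q x y) = 1) \<and>
     (\<forall>t<T. \<forall>xs y.
        measure Ps {\<omega>\<in>space Ps. (\<forall>s\<le>t. Y s \<omega> = xs s) \<and> Y (Suc t) \<omega> = y}
        = measure Ps {\<omega>\<in>space Ps. \<forall>s\<le>t. Y s \<omega> = xs s} * Q (xs t) y)"

definition U ::
  "(nat \<Rightarrow> 'a \<Rightarrow> 'a \<Rightarrow> real) \<Rightarrow> (nat \<Rightarrow> nat \<Rightarrow> 'w \<Rightarrow> 'a) \<Rightarrow> nat \<Rightarrow> nat \<Rightarrow> 'a \<Rightarrow> 'a \<Rightarrow> 'w \<Rightarrow> real" where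
  "U P X m t i j \<omega> =
     (if t = 0 then 0
      else of_bool (X m (t - 1) \<omega> = i) * (of_bool (X m t \<omega> = j) - P m i j))"

text \<open>Inverse of the bijection (m,t) \<mapsto> k = m + t M (k \<ge> 1): m = ((k-1) mod M) + 1, t = (k-1) div M.\<close>
definition row_of :: "nat \<Rightarrow> nat \<Rightarrow> nat" where
  "row_of M k = Suc ((k - 1) mod M)"

definition col_of :: "nat \<Rightarrow> nat \<Rightarrow> nat" where
  "col_of M k = (k - 1) div M"

definition Xbar :: "nat \<Rightarrow> (nat \<Rightarrow> nat \<Rightarrow> 'w \<Rightarrow> 'a) \<Rightarrow> nat \<Rightarrow> 'w \<Rightarrow> 'a" where
  "Xbar M X k = X (row_of M k) (col_of M k)"

definition Ubar ::
  "nat \<Rightarrow> (nat \<Rightarrow> 'a \<Rightarrow> 'a \<Rightarrow> real) \<Rightarrow> (nat \<Rightarrow> nat \<Rightarrow> 'w \<Rightarrow> 'a) \<Rightarrow> nat \<Rightarrow> 'a \<Rightarrow> 'a \<Rightarrow> 'w \<Rightarrow> real" where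
  "Ubar M P X k i j = U P X (row_of M k) (col_of M k) i j"

definition Vbar ::
  "nat \<Rightarrow> (nat \<Rightarrow> 'a \<Rightarrow> 'a \<Rightarrow> real) \<Rightarrow> (nat \<Rightarrow> nat \<Rightarrow> 'w \<Rightarrow> 'a) \<Rightarrow> nat \<Rightarrow> 'a \<Rightarrow> 'a \<Rightarrow> 'w \<Rightarrow> real" where
  "Vbar M P X k i j \<omega> = (\<Sum>k'\<in>{1..k}. Ubar M P X k' i j \<omega>)"

definition Fk :: "'w measure \<Rightarrow> nat \<Rightarrow> (nat \<Rightarrow> nat \<Rightarrow> 'w \<Rightarrow> 'a) \<Rightarrow> nat \<Rightarrow> 'w measure" where
  "Fk Ps M X k = sigma (space Ps) (\<Union>j\<in>{1..k}. {Xbar M X j -` A \<inter> space Ps | A. True})"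

definition martingale_upto ::
  "'w measure \<Rightarrow> (nat \<Rightarrow> 'w measure) \<Rightarrow> (nat \<Rightarrow> 'w \<Rightarrow> real) \<Rightarrow> nat \<Rightarrow> bool" where
  "martingale_upto Ps F V K \<longleftrightarrow>
     (\<forall>k\<le>K. subalgebra Ps (F k)) \<and>
     (\<forall>k<K. sets (F k) \<subseteq> sets (F (Suc k))) \<and>
     (\<forall>k\<le>K. V k \<in> borel_measurable (F k) \<and> integrable Ps (V k)) \<and>
     (\<forall>k<K. AE \<omega> in Ps. real_cond_exp Ps (F k) (V (Suc k)) \<omega> = V k \<omega>)"

definition vec_martingale_upto ::
  "'w measure \<Rightarrow> (nat \<Rightarrow> 'w measure) \<Rightarrow> (nat \<Rightarrow> 'a \<Rightarrow> 'w \<Rightarrow> real) \<Rightarrow> nat \<Rightarrow> bool" where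
  "vec_martingale_upto Ps F V K \<longleftrightarrow> (\<forall>j. martingale_upto Ps F (\<lambda>k. V k j) K)"

end

theory Submission
  imports Defs
begin


lemma rc_inv:
  assumes "1 \<le> r" "r \<le> M"
  shows "row_of M (r + s * M) = r" "col_of M (r + s * M) = s"
proof -
  have e: "r + s * M - 1 = (r - 1) + s * M" using assms by simp
  have m: "(r - 1) mod M = r - 1" "(r - 1) div M = 0" using assms by auto
  have "(r + s * M - 1) mod M = r - 1" using e m by (metis mod_mult_self1)
  then show "row_of M (r + s * M) = r" unfolding row_of_def using assms by simp
  have "(r + s * M - 1) div M = s" proof -
    have "M \<noteq> 0" using assms by auto
    then show ?thesis unfolding e using m by simp
  qed
  then show "col_of M (r + s * M) = s" unfolding col_of_def by simp
qed

lemma rc_range: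
  assumes "1 \<le> k" "1 \<le> M"
  shows "1 \<le> row_of M k" "row_of M k \<le> M" "row_of M k + col_of M k * M = k"
proof -
  show "1 \<le> row_of M k" by (simp add: row_of_def)
  show "row_of M k \<le> M" using assms by (simp add: row_of_def Suc_le_eq)
  have "(k - 1) mod M + (k - 1) div M * M = k - 1" by simp
  then show "row_of M k + col_of M k * M = k" using assms by (simp add: row_of_def col_of_def)
qed

lemma col_bound:
  assumes "k \<le> M * (T + 1)" "1 \<le> k" "1 \<le> M"
  shows "col_of M k \<le> T"
proof -
  have "k - 1 < M * (T+1)" using assms by simp
  then have "(k - 1) div M < T + 1" using assms by (metis div_less_iff_less_mult mult.commute less_le_trans zero_less_one)
  then show ?thesis by (simp add: col_of_def)
qed




locale lsetup = prob_space Ps for Ps :: "'w measure" +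
  fixes M T :: nat and X :: "nat \<Rightarrow> nat \<Rightarrow> 'w \<Rightarrow> 'a::finite"
    and P :: "nat \<Rightarrow> 'a \<Rightarrow> 'a \<Rightarrow> real"
  assumes M1: "M \<ge> 1" and T1: "T \<ge> 1"
    and meas: "\<forall>m\<in>{1..M}. \<forall>t\<le>T. X m t \<in> measurable Ps (count_space UNIV)"
    and indep: "indep_vars (\<lambda>_. Pi\<^sub>M {..T} (\<lambda>_. count_space UNIV))
                  (\<lambda>m \<omega>. \<lambda>t\<in>{..T}. X m t \<omega>) {1..M}"
    and markov: "\<forall>m\<in>{1..M}. markov_chain_row Ps (X m) (P m) T"
begin

abbreviation "KK \<equiv> M * (T + 1)"
abbreviation "G k \<equiv> (\<Union>j\<in>{1..k}. {Xbar M X j -` A \<inter> space Ps | A. True})"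

lemma Xbar_meas: "j \<in> {1..KK} \<Longrightarrow> Xbar M X j \<in> measurable Ps (count_space UNIV)"
  unfolding Xbar_def using meas rc_range[of j M] col_bound[of j M T] M1 by auto

lemma G_pow: "G k \<subseteq> Pow (space Ps)" by auto

lemma Fk_space[simp]: "space (Fk Ps M X k) = space Ps"
  unfolding Fk_def by (rule space_measure_of[OF G_pow])

lemma Fk_sets: "sets (Fk Ps M X k) = sigma_sets (space Ps) (G k)"
  unfolding Fk_def by (rule sets_measure_of[OF G_pow])

lemma Fk_sub: "k \<le> KK \<Longrightarrow> subalgebra Ps (Fk Ps M X k)"
  unfolding subalgebra_def Fk_space Fk_sets
proof (intro conjI refl sets.sigma_sets_subset subsetI)
  fix x assume "k \<le> KK" "x \<in> G k"
  then obtain j A where "j \<in> {1..k}" "x = Xbar M X j -` A \<inter> space Ps" by auto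
  moreover have "Xbar M X j \<in> measurable Ps (count_space UNIV)"
    using Xbar_meas \<open>j \<in> {1..k}\<close> \<open>k \<le> KK\<close> by auto
  ultimately show "x \<in> sets Ps" by (simp add: measurable_sets)
qed

lemma Fk_mono: "sets (Fk Ps M X k) \<subseteq> sets (Fk Ps M X (Suc k))"
  unfolding Fk_sets by (rule sigma_sets_mono') force

lemma Xbar_Fk: "j \<in> {1..k} \<Longrightarrow> Xbar M X j \<in> measurable (Fk Ps M X k) (count_space UNIV)"
proof (rule measurableI)
  fix A assume "j \<in> {1..k}"
  then have "Xbar M X j -` A \<inter> space Ps \<in> G k" by blast
  then show "Xbar M X j -` A \<inter> space (Fk Ps M X k) \<in> sets (Fk Ps M X k)"
    unfolding Fk_sets Fk_space by (rule sigma_sets.Basic)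
qed auto

lemma Ubar_form:
  assumes "1 \<le> k'"
  shows "Ubar M P X k' i j \<omega> = (if col_of M k' = 0 then 0 else
     of_bool (Xbar M X (k' - M) \<omega> = i) * (of_bool (Xbar M X k' \<omega> = j) - P (row_of M k') i j))"
proof (cases "col_of M k' = 0")
  case True then show ?thesis by (simp add: Ubar_def U_def)
next
  case False
  define r c where "r = row_of M k'" "c = col_of M k'"
  have rr: "1 \<le> r" "r \<le> M" "r + c * M = k'" using rc_range[of k' M] assms M1 r_c_def by auto
  have "c * M = (c - 1) * M + M" using False r_c_def(2)[symmetric] by (cases c) auto
  then have "k' - M = r + (c - 1) * M" using rr by simp
  then have "Xbar M X (k' - M) = X r (c - 1)" unfolding Xbar_def using rc_inv[OF rr(1,2)] by simp
  moreover have "Xbar M X k' = X r c" unfolding Xbar_def r_c_def by simp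
  ultimately show ?thesis using False unfolding Ubar_def U_def r_c_def by simp
qed

lemma Ubar_meas_F:
  assumes "1 \<le> k'" "k' \<le> k"
  shows "(\<lambda>\<omega>. Ubar M P X k' i j \<omega>) \<in> borel_measurable (Fk Ps M X k)"
proof (cases "col_of M k' = 0")
  case True then show ?thesis using Ubar_form[OF assms(1)] by simp
next
  case False
  have "M \<le> k' - 1"
  proof (rule ccontr)
    assume "\<not> M \<le> k' - 1"
    then have "(k' - 1) div M = 0" by simp
    then show False using False by (simp add: col_of_def)
  qed
  then have "k' - M \<in> {1..k}" using assms by auto
  note [measurable] = Xbar_Fk[OF this] Xbar_Fk[of k' k]
  have "k' \<in> {1..k}" using assms by auto
  then show ?thesis unfolding Ubar_form[OF assms(1)] using False by measurable
qed

lemma Vbar_meas_F: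
  "(\<lambda>\<omega>. Vbar M P X k i j \<omega>) \<in> borel_measurable (Fk Ps M X k)"
  unfolding Vbar_def by (intro borel_measurable_sum Ubar_meas_F) auto

end



context lsetup begin

lemma prod_events:
  fixes D :: "nat \<Rightarrow> nat set" and w :: "nat \<Rightarrow> nat \<Rightarrow> 'a"
  assumes D: "\<And>r. r \<in> {1..M} \<Longrightarrow> D r \<subseteq> {..T}"
  shows "prob {\<omega>\<in>space Ps. \<forall>r\<in>{1..M}. \<forall>s\<in>D r. X r s \<omega> = w r s}
       = (\<Prod>r\<in>{1..M}. prob {\<omega>\<in>space Ps. \<forall>s\<in>D r. X r s \<omega> = w r s})"
proof -
  define E where "E r = {\<omega>\<in>space Ps. \<forall>s\<in>D r. X r s \<omega> = w r s}" for r
  define S where "S r = (\<Pi>\<^sub>E s\<in>{..T}. if s \<in> D r then {w r s} else UNIV)" for r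
  have ind: "indep_sets (\<lambda>r. {(\<lambda>\<omega>. \<lambda>t\<in>{..T}. X r t \<omega>) -` A \<inter> space Ps | A.
       A \<in> sets (Pi\<^sub>M {..T} (\<lambda>_. count_space UNIV))}) {1..M}"
    using indep unfolding indep_vars_def2 by auto
  have "E r \<in> {(\<lambda>\<omega>. \<lambda>t\<in>{..T}. X r t \<omega>) -` A \<inter> space Ps | A.
       A \<in> sets (Pi\<^sub>M {..T} (\<lambda>_. count_space UNIV))}" if "r \<in> {1..M}" for r
  proof (intro CollectI exI conjI)
    show "S r \<in> sets (Pi\<^sub>M {..T} (\<lambda>_. count_space UNIV))"
      unfolding S_def by (intro sets_PiM_I_finite) auto
    show "E r = (\<lambda>\<omega>. \<lambda>t\<in>{..T}. X r t \<omega>) -` S r \<inter> space Ps"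
      using D[OF that] unfolding E_def S_def by (auto simp: PiE_iff split: if_splits)
  qed
  then have "prob (\<Inter>r\<in>{1..M}. E r) = (\<Prod>r\<in>{1..M}. prob (E r))"
    using ind M1 unfolding indep_sets_def by (auto simp: Pi_iff)
  moreover have "(\<Inter>r\<in>{1..M}. E r) = {\<omega>\<in>space Ps. \<forall>r\<in>{1..M}. \<forall>s\<in>D r. X r s \<omega> = w r s}"
    using M1 unfolding E_def by auto
  ultimately show ?thesis unfolding E_def by simp
qed

definition atom :: "nat \<Rightarrow> (nat \<Rightarrow> 'a) \<Rightarrow> 'w set" where
  "atom k v = {\<omega>\<in>space Ps. \<forall>j\<in>{1..k}. Xbar M X j \<omega> = v j}"

definition DD :: "nat \<Rightarrow> nat \<Rightarrow> nat set" where
  "DD k r = {s. s \<le> T \<and> r + s * M \<le> k}"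

lemma atom_eq:
  assumes "k \<le> KK"
  shows "atom k v = {\<omega>\<in>space Ps. \<forall>r\<in>{1..M}. \<forall>s\<in>DD k r. X r s \<omega> = v (r + s * M)}"
proof (intro set_eqI iffI)
  fix \<omega> assume a: "\<omega> \<in> atom k v"
  show "\<omega> \<in> {\<omega>\<in>space Ps. \<forall>r\<in>{1..M}. \<forall>s\<in>DD k r. X r s \<omega> = v (r + s * M)}"
  proof (safe)
    show "\<omega> \<in> space Ps" using a by (simp add: atom_def)
    fix r s assume r: "r \<in> {1..M}" and s: "s \<in> DD k r"
    then have "r + s * M \<in> {1..k}" by (auto simp: DD_def)
    then have "Xbar M X (r + s * M) \<omega> = v (r + s * M)" using a by (simp add: atom_def)
    then show "X r s \<omega> = v (r + s * M)" using rc_inv[of r M s] r by (simp add: Xbar_def)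
  qed
next
  fix \<omega> assume a: "\<omega> \<in> {\<omega>\<in>space Ps. \<forall>r\<in>{1..M}. \<forall>s\<in>DD k r. X r s \<omega> = v (r + s * M)}"
  show "\<omega> \<in> atom k v" unfolding atom_def
  proof (safe)
    show "\<omega> \<in> space Ps" using a by simp
    fix j assume j: "j \<in> {1..k}"
    have r: "row_of M j \<in> {1..M}" "row_of M j + col_of M j * M = j"
      using rc_range[of j M] j M1 by auto
    have "col_of M j \<in> DD k (row_of M j)"
      using col_bound[of j M T] j assms M1 r by (auto simp: DD_def)
    then show "Xbar M X j \<omega> = v j" using a r by (auto simp: Xbar_def)
  qed
qed

lemma atom_Suc: "atom (Suc k) (v(Suc k := b)) = atom k v \<inter> {\<omega>. Xbar M X (Suc k) \<omega> = b}"
  unfolding atom_def by (auto simp: atLeastAtMostSuc_conv)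

lemma atom_step:
  assumes k: "Suc k \<le> KK" and c: "col_of M (Suc k) \<noteq> 0"
  shows "prob (atom k v \<inter> {\<omega>. Xbar M X (Suc k) \<omega> = b})
       = prob (atom k v) * P (row_of M (Suc k)) (v (Suc k - M)) b"
proof -
  define m t where "m = row_of M (Suc k)" "t = col_of M (Suc k)"
  have mt: "m \<in> {1..M}" "m + t * M = Suc k" "t \<le> T" "1 \<le> t"
    using rc_range[of "Suc k" M] col_bound[of "Suc k" M T] M1 k c m_t_def by auto
  define v' where "v' = v(Suc k := b)"
  define f where "f k' w r = prob {\<omega>\<in>space Ps. \<forall>s\<in>DD k' r. X r s \<omega> = w (r + s * M)}" for k' w r
  have DDsub: "DD k' r \<subseteq> {..T}" for k' r by (auto simp: DD_def)
  have p1: "prob (atom k v) = (\<Prod>r\<in>{1..M}. f k v r)"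
    unfolding atom_eq[OF Suc_leD[OF k]] f_def by (rule prod_events[OF DDsub])
  have p2: "prob (atom (Suc k) v') = (\<Prod>r\<in>{1..M}. f (Suc k) v' r)"
    unfolding atom_eq[OF k] f_def by (rule prod_events[OF DDsub])
  have oth: "f (Suc k) v' r = f k v r" if r: "r \<in> {1..M} - {m}" for r
  proof -
    have "r + s * M \<noteq> Suc k" for s
    proof
      assume "r + s * M = Suc k"
      then have "row_of M (Suc k) = r" using rc_inv[of r M s] r by auto
      then show False using r m_t_def by auto
    qed
    then have "DD (Suc k) r = DD k r" by (auto simp: DD_def le_Suc_eq)
    moreover have "v' (r + s * M) = v (r + s * M)" if "s \<in> DD k r" for s
      using that by (auto simp: v'_def DD_def)
    ultimately show ?thesis unfolding f_def by (intro arg_cong[where f=prob]) auto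
  qed
  have tM: "t * M = (t - 1) * M + M" using mt by (cases t) auto
  have D1: "DD k m = {..t - 1}"
  proof -
    have "s \<le> T \<and> m + s * M \<le> k \<longleftrightarrow> s \<le> t - 1" for s
    proof -
      have "m + s * M \<le> k \<longleftrightarrow> m + s * M < m + t * M" using mt(2) by linarith
      also have "\<dots> \<longleftrightarrow> s * M < t * M" by simp
      also have "\<dots> \<longleftrightarrow> s < t" using M1 by simp
      finally show ?thesis using mt by auto
    qed
    then show ?thesis by (auto simp: DD_def)
  qed
  have D2: "DD (Suc k) m = {..t}"
  proof -
    have "s \<le> T \<and> m + s * M \<le> Suc k \<longleftrightarrow> s \<le> t" for s
    proof -
      have "m + s * M \<le> Suc k \<longleftrightarrow> m + s * M \<le> m + t * M" using mt(2) by linarith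
      also have "\<dots> \<longleftrightarrow> s * M \<le> t * M" by simp
      also have "\<dots> \<longleftrightarrow> s \<le> t" using M1 by simp
      finally show ?thesis using mt by auto
    qed
    then show ?thesis by (auto simp: DD_def)
  qed
  define xs where "xs s = v' (m + s * M)" for s
  have mk: "markov_chain_row Ps (X m) (P m) T" using markov mt by auto
  have tT: "t - 1 < T" using mt by auto
  have mar: "prob {\<omega>\<in>space Ps. (\<forall>s\<le>t - 1. X m s \<omega> = xs s) \<and> X m (Suc (t - 1)) \<omega> = b}
        = prob {\<omega>\<in>space Ps. \<forall>s\<le>t - 1. X m s \<omega> = xs s} * P m (xs (t - 1)) b"
    using mk tT unfolding markov_chain_row_def by blast
  have xt: "xs t = b" using mt by (simp add: xs_def v'_def)
  have xs_lt: "xs s = v (m + s * M)" if "s \<le> t - 1" for s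
  proof -
    have "s * M \<le> (t - 1) * M" using that by simp
    then have "m + s * M \<noteq> Suc k" using mt tM M1 by linarith
    then show ?thesis by (simp add: xs_def v'_def)
  qed
  have "f (Suc k) v' m = prob {\<omega>\<in>space Ps. \<forall>s\<le>t. X m s \<omega> = xs s}"
    unfolding f_def D2 xs_def by (rule arg_cong[where f=prob]) auto
  also have "{\<omega>\<in>space Ps. \<forall>s\<le>t. X m s \<omega> = xs s}
      = {\<omega>\<in>space Ps. (\<forall>s\<le>t - 1. X m s \<omega> = xs s) \<and> X m (Suc (t - 1)) \<omega> = b}"
  proof -
    obtain t' where t': "t = Suc t'" using mt by (cases t) auto
    show ?thesis using xt unfolding t' by (auto simp: le_Suc_eq)
  qed
  also have "prob \<dots> = prob {\<omega>\<in>space Ps. \<forall>s\<le>t - 1. X m s \<omega> = xs s} * P m (xs (t - 1)) b"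
    by (rule mar)
  also have "{\<omega>\<in>space Ps. \<forall>s\<le>t - 1. X m s \<omega> = xs s}
      = {\<omega>\<in>space Ps. \<forall>s\<in>DD k m. X m s \<omega> = v (m + s * M)}"
    unfolding D1 using xs_lt by (auto simp: atMost_iff)
  finally have fm: "f (Suc k) v' m = f k v m * P m (xs (t - 1)) b" unfolding f_def by simp
  have "Suc k - M = m + (t - 1) * M" using mt(2) tM by linarith
  then have "xs (t - 1) = v (Suc k - M)"
    using xs_lt[of "t - 1"] by simp
  then have fm': "f (Suc k) v' m = f k v m * P m (v (Suc k - M)) b" using fm by simp
  have "prob (atom (Suc k) v') = f (Suc k) v' m * (\<Prod>r\<in>{1..M} - {m}. f (Suc k) v' r)"
    unfolding p2 using mt by (simp add: prod.remove)
  also have "\<dots> = f k v m * P m (v (Suc k - M)) b * (\<Prod>r\<in>{1..M} - {m}. f k v r)"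
    using fm' oth by simp
  also have "\<dots> = prob (atom k v) * P m (v (Suc k - M)) b"
    unfolding p1 using mt by (simp add: prod.remove)
  finally show ?thesis unfolding v'_def atom_Suc m_t_def by simp
qed

end



context lsetup begin

lemma atom_sets: "k \<le> KK \<Longrightarrow> atom k v \<in> sets Ps"
  unfolding atom_def
proof (rule sets.sets_Collect_finite_All)
  fix j assume "k \<le> KK" "j \<in> {1..k}"
  then have m: "Xbar M X j \<in> measurable Ps (count_space UNIV)" using Xbar_meas by auto
  have "{x\<in>space Ps. Xbar M X j x = v j} = Xbar M X j -` {v j} \<inter> space Ps" by auto
  then show "{x\<in>space Ps. Xbar M X j x = v j} \<in> sets Ps" using measurable_sets[OF m] by simp
qed auto

lemma Ubar_meas: "1 \<le> k' \<Longrightarrow> k' \<le> KK \<Longrightarrow> Ubar M P X k' i j \<in> borel_measurable Ps"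
  using measurable_from_subalg[OF Fk_sub[OF order_refl] Ubar_meas_F[of k' KK]] by simp

lemma Ubar_abs: "1 \<le> k' \<Longrightarrow> \<bar>Ubar M P X k' i j \<omega>\<bar> \<le> 1 + \<bar>P (row_of M k') i j\<bar>"
  unfolding Ubar_form by (auto simp: abs_if)

lemma Ubar_int_ind:
  assumes "1 \<le> k'" "k' \<le> KK" "A \<in> sets Ps"
  shows "integrable Ps (\<lambda>\<omega>. indicator A \<omega> * Ubar M P X k' i j \<omega>)"
proof (rule integrable_const_bound[where B="1 + \<bar>P (row_of M k') i j\<bar>"])
  show "AE x in Ps. norm (indicator A x * Ubar M P X k' i j x) \<le> 1 + \<bar>P (row_of M k') i j\<bar>"
  proof (intro AE_I2)
    fix x
    have "norm (indicator A x * Ubar M P X k' i j x) \<le> \<bar>Ubar M P X k' i j x\<bar>"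
      by (simp add: indicator_def)
    then show "norm (indicator A x * Ubar M P X k' i j x) \<le> 1 + \<bar>P (row_of M k') i j\<bar>"
      using Ubar_abs[OF assms(1), of i j x] by linarith
  qed
  show "(\<lambda>\<omega>. indicator A \<omega> * Ubar M P X k' i j \<omega>) \<in> borel_measurable Ps"
    using Ubar_meas[OF assms(1,2)] assms(3) by measurable
qed

lemma Ubar_int:
  assumes "1 \<le> k'" "k' \<le> KK"
  shows "integrable Ps (Ubar M P X k' i j)"
proof (rule integrable_const_bound[where B="1 + \<bar>P (row_of M k') i j\<bar>"])
  show "AE x in Ps. norm (Ubar M P X k' i j x) \<le> 1 + \<bar>P (row_of M k') i j\<bar>"
    using Ubar_abs[OF assms(1)] by (auto intro!: AE_I2)
qed (rule Ubar_meas[OF assms])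

lemma Vbar_int: "k \<le> KK \<Longrightarrow> integrable Ps (Vbar M P X k i j)"
proof -
  assume k: "k \<le> KK"
  have "Vbar M P X k i j = (\<lambda>\<omega>. \<Sum>k'\<in>{1..k}. Ubar M P X k' i j \<omega>)"
    by (simp add: Vbar_def fun_eq_iff)
  then show ?thesis using k by (auto intro!: integrable_sum Ubar_int)
qed

lemma atom_integral:
  assumes k: "Suc k \<le> KK"
  shows "(\<integral>\<omega>. indicator (atom k v) \<omega> * Ubar M P X (Suc k) i j \<omega> \<partial>Ps) = 0"
proof (cases "col_of M (Suc k) = 0")
  case True then show ?thesis by (simp add: Ubar_form)
next
  case False
  define p where "p = P (row_of M (Suc k)) i j"
  define c :: real where "c = of_bool (v (Suc k - M) = i)"
  define B where "B = atom k v \<inter> {\<omega>. Xbar M X (Suc k) \<omega> = j}"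
  have "M \<le> k"
  proof (rule ccontr)
    assume "\<not> M \<le> k"
    then have "(Suc k - 1) div M = 0" by simp
    then show False using False by (simp add: col_of_def)
  qed
  then have kM: "Suc k - M \<in> {1..k}" using M1 by auto
  have as: "atom k v \<in> sets Ps" using atom_sets k by simp
  have "B = atom (Suc k) (v(Suc k := j))" unfolding B_def atom_Suc by simp
  then have bs: "B \<in> sets Ps" using atom_sets[OF k] by simp
  have pt: "indicator (atom k v) \<omega> * Ubar M P X (Suc k) i j \<omega>
      = c * (indicator B \<omega> - p * indicator (atom k v) \<omega>)" for \<omega>
  proof (cases "\<omega> \<in> atom k v")
    case True
    then have "Xbar M X (Suc k - M) \<omega> = v (Suc k - M)" using kM by (simp add: atom_def)
    then show ?thesis using True False unfolding Ubar_form[of "Suc k", simplified] c_def p_def B_def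
      by (simp add: indicator_def)
  next
    case False then show ?thesis by (simp add: B_def indicator_def)
  qed
  have ib: "integrable Ps (indicator B :: 'w \<Rightarrow> real)" "integrable Ps (indicator (atom k v) :: 'w \<Rightarrow> real)"
    using bs as by (auto simp: top.not_eq_extremum[symmetric])
  have "(\<integral>\<omega>. indicator (atom k v) \<omega> * Ubar M P X (Suc k) i j \<omega> \<partial>Ps)
      = c * (prob B - p * prob (atom k v))"
    unfolding pt using ib bs as by (simp add: Int_absorb2 sets.sets_into_space)
  also have "prob B = prob (atom k v) * P (row_of M (Suc k)) (v (Suc k - M)) j"
    unfolding B_def by (rule atom_step[OF k False])
  finally show ?thesis by (simp add: c_def p_def)
qed

lemma Fk_atoms:
  assumes "A \<in> sets (Fk Ps M X k)"
  shows "atom k v \<subseteq> A \<or> atom k v \<inter> A = {}"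
  using assms unfolding Fk_sets
proof (induct A rule: sigma_sets.induct)
  case (Basic a)
  then obtain j B where j: "j \<in> {1..k}" and a: "a = Xbar M X j -` B \<inter> space Ps" by auto
  show ?case
  proof (cases "v j \<in> B")
    case True then show ?thesis using j a by (auto simp: atom_def)
  next
    case False then show ?thesis using j a by (auto simp: atom_def)
  qed
next
  case Empty then show ?case by simp
next
  case (Compl a)
  have "atom k v \<subseteq> space Ps" by (auto simp: atom_def)
  then show ?case using Compl by blast
next
  case (Union a)
  then show ?case by blast
qed

lemma U_integral_zero:
  assumes k: "Suc k \<le> KK" and A: "A \<in> sets (Fk Ps M X k)"
  shows "(\<integral>\<omega>. indicator A \<omega> * Ubar M P X (Suc k) i j \<omega> \<partial>Ps) = 0"
proof -
  define V where "V = (PiE {1..k} (\<lambda>_. UNIV) :: (nat \<Rightarrow> 'a) set)"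
  have fV: "finite V" unfolding V_def by (simp add: finite_PiE)
  have AP: "A \<in> sets Ps" using Fk_sub[of k] k A by (auto simp: subalgebra_def)
  let ?U = "Ubar M P X (Suc k) i j"
  have part: "(\<Sum>v\<in>V. indicator (atom k v) \<omega>) = (1::real)" if "\<omega> \<in> space Ps" for \<omega>
  proof -
    define v0 where "v0 = restrict (\<lambda>j. Xbar M X j \<omega>) {1..k}"
    have "v0 \<in> V" by (simp add: V_def v0_def)
    have "indicator (atom k v) \<omega> = (if v = v0 then 1 else (0::real))" if "v \<in> V" for v
    proof -
      have "\<omega> \<in> atom k v \<longleftrightarrow> v = v0"
        using that \<open>\<omega> \<in> space Ps\<close> unfolding atom_def v0_def V_def
        by (auto simp: PiE_def extensional_def fun_eq_iff)
      then show ?thesis by (simp add: indicator_def)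
    qed
    then have "(\<Sum>v\<in>V. indicator (atom k v) \<omega>) = (\<Sum>v\<in>V. if v = v0 then 1 else (0::real))"
      by (rule sum.cong[OF refl])
    also have "\<dots> = 1" using fV \<open>v0 \<in> V\<close> by simp
    finally show ?thesis .
  qed
  have "(\<integral>\<omega>. indicator A \<omega> * ?U \<omega> \<partial>Ps)
      = (\<integral>\<omega>. (\<Sum>v\<in>V. indicator A \<omega> * (indicator (atom k v) \<omega> * ?U \<omega>)) \<partial>Ps)"
  proof (rule Bochner_Integration.integral_cong[OF refl])
    fix \<omega> assume "\<omega> \<in> space Ps"
    then have "indicator A \<omega> * ?U \<omega> = indicator A \<omega> * ((\<Sum>v\<in>V. indicator (atom k v) \<omega>) * ?U \<omega>)"
      using part by simp
    then show "indicator A \<omega> * ?U \<omega> = (\<Sum>v\<in>V. indicator A \<omega> * (indicator (atom k v) \<omega> * ?U \<omega>))"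
      by (simp add: sum_distrib_left sum_distrib_right)
  qed
  also have "\<dots> = (\<Sum>v\<in>V. \<integral>\<omega>. indicator A \<omega> * (indicator (atom k v) \<omega> * ?U \<omega>) \<partial>Ps)"
  proof (rule Bochner_Integration.integral_sum)
    fix v assume "v \<in> V"
    have "integrable Ps (\<lambda>\<omega>. indicator (A \<inter> atom k v) \<omega> * ?U \<omega>)"
      using Ubar_int_ind[of "Suc k" "A \<inter> atom k v"] k AP atom_sets[of k v] by auto
    then show "integrable Ps (\<lambda>\<omega>. indicator A \<omega> * (indicator (atom k v) \<omega> * ?U \<omega>))"
      by (simp add: indicator_inter_arith mult.assoc)
  qed
  also have "\<dots> = 0"
  proof (rule sum.neutral, rule ballI)
    fix v assume "v \<in> V"
    show "(\<integral>\<omega>. indicator A \<omega> * (indicator (atom k v) \<omega> * ?U \<omega>) \<partial>Ps) = 0"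
    proof (cases "atom k v \<subseteq> A")
      case True
      then have "(\<lambda>\<omega>. indicator A \<omega> * (indicator (atom k v) \<omega> * ?U \<omega>))
          = (\<lambda>\<omega>. indicator (atom k v) \<omega> * ?U \<omega>)"
        by (auto simp: fun_eq_iff indicator_def)
      then show ?thesis using atom_integral[OF k] by simp
    next
      case False
      then have "atom k v \<inter> A = {}" using Fk_atoms[OF A] by blast
      then have "(\<lambda>\<omega>. indicator A \<omega> * (indicator (atom k v) \<omega> * ?U \<omega>)) = (\<lambda>\<omega>. 0)"
        by (auto simp: fun_eq_iff indicator_def)
      then show ?thesis by simp
    qed
  qed
  finally show ?thesis .
qed

end



lemma sq_bound:
  fixes p :: "'a::finite \<Rightarrow> real" and x :: 'a
  assumes nn: "\<forall>y. 0 \<le> p y" and s1: "sum p UNIV = 1"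
  shows "(\<Sum>j\<in>UNIV. (of_bool (x = j) - p j)\<^sup>2) \<le> 2"
proof -
  have le1: "p y \<le> 1" for y using member_le_sum[of y UNIV p] nn s1 by auto
  have "(of_bool (x = j) - p j)\<^sup>2 \<le> of_bool (x = j) + p j" for j
  proof (cases "x = j")
    case True
    have "(1 - p j)\<^sup>2 \<le> 1" using nn le1[of j] by (simp add: power2_eq_square mult_le_one)
    then show ?thesis using True nn[rule_format, of j] by simp
  next
    case False
    have "(p j)\<^sup>2 \<le> p j" using nn le1[of j] by (simp add: power2_eq_square mult_le_one mult_left_le)
    then show ?thesis using False by simp
  qed
  then have "(\<Sum>j\<in>UNIV. (of_bool (x = j) - p j)\<^sup>2) \<le> (\<Sum>j\<in>UNIV. of_bool (x = j) + p j)"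
    by (rule sum_mono)
  also have "\<dots> = 2" using s1 by (simp add: sum.distrib)
  finally show ?thesis .
qed

context lsetup begin

lemma martingale: "martingale_upto Ps (Fk Ps M X) (\<lambda>k. Vbar M P X k i j) KK"
  unfolding martingale_upto_def
proof (intro conjI allI impI)
  fix k assume "k \<le> KK" then show "subalgebra Ps (Fk Ps M X k)" by (rule Fk_sub)
next
  fix k show "sets (Fk Ps M X k) \<subseteq> sets (Fk Ps M X (Suc k))" by (rule Fk_mono)
next
  fix k show "Vbar M P X k i j \<in> borel_measurable (Fk Ps M X k)"
    using Vbar_meas_F[of k i j] by simp
next
  fix k assume "k \<le> KK" then show "integrable Ps (Vbar M P X k i j)" by (rule Vbar_int)
next
  fix k assume k: "k < KK"
  interpret fs: finite_measure_subalgebra Ps "Fk Ps M X k"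
    by unfold_locales (use Fk_sub k in auto)
  show "AE \<omega> in Ps. real_cond_exp Ps (Fk Ps M X k) (Vbar M P X (Suc k) i j) \<omega> = Vbar M P X k i j \<omega>"
  proof (rule fs.real_cond_exp_charact)
    fix A assume A: "A \<in> sets (Fk Ps M X k)"
    have AP: "A \<in> sets Ps" using Fk_sub[of k] k A by (auto simp: subalgebra_def)
    have eq: "Vbar M P X (Suc k) i j \<omega> = Vbar M P X k i j \<omega> + Ubar M P X (Suc k) i j \<omega>" for \<omega>
      by (simp add: Vbar_def)
    have "(\<integral>\<omega>\<in>A. Vbar M P X (Suc k) i j \<omega> \<partial>Ps)
        = (\<integral>\<omega>\<in>A. Vbar M P X k i j \<omega> + Ubar M P X (Suc k) i j \<omega> \<partial>Ps)"
      unfolding eq ..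
    also have "\<dots> = (\<integral>\<omega>\<in>A. Vbar M P X k i j \<omega> \<partial>Ps) + (\<integral>\<omega>\<in>A. Ubar M P X (Suc k) i j \<omega> \<partial>Ps)"
    proof (rule set_integral_add)
      show "set_integrable Ps A (Vbar M P X k i j)" unfolding set_integrable_def
        using Vbar_int[of k i j] k AP by (intro integrable_mult_indicator) auto
      show "set_integrable Ps A (Ubar M P X (Suc k) i j)" unfolding set_integrable_def
        using Ubar_int[of "Suc k" i j] k AP by (intro integrable_mult_indicator) auto
    qed
    also have "(\<integral>\<omega>\<in>A. Ubar M P X (Suc k) i j \<omega> \<partial>Ps) = 0"
      using U_integral_zero[of k A i j] k A unfolding set_lebesgue_integral_def by simp
    finally show "(\<integral>\<omega>\<in>A. Vbar M P X (Suc k) i j \<omega> \<partial>Ps) = (\<integral>\<omega>\<in>A. Vbar M P X k i j \<omega> \<partial>Ps)"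
      by simp
  next
    show "integrable Ps (Vbar M P X (Suc k) i j)" using k by (intro Vbar_int) auto
    show "integrable Ps (Vbar M P X k i j)" using k by (intro Vbar_int) auto
    show "Vbar M P X k i j \<in> borel_measurable (Fk Ps M X k)"
      using Vbar_meas_F[of k i j] by simp
  qed
qed

lemma bound:
  assumes "k \<in> {1..KK}"
  shows "sqrt (\<Sum>j\<in>UNIV. (Ubar M P X k i j \<omega>)\<^sup>2) \<le> sqrt 2"
proof -
  have r: "row_of M k \<in> {1..M}" using rc_range[of k M] M1 assms by auto
  then have mk: "markov_chain_row Ps (X (row_of M k)) (P (row_of M k)) T" using markov by auto
  have "(\<Sum>j\<in>UNIV. (Ubar M P X k i j \<omega>)\<^sup>2) \<le> 2"
  proof (cases "col_of M k = 0 \<or> Xbar M X (k - M) \<omega> \<noteq> i")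
    case True
    have "Ubar M P X k i j \<omega> = 0" for j
    proof -
      have k1: "1 \<le> k" using assms by auto
      show ?thesis using True unfolding Ubar_form[OF k1] by (cases "col_of M k = 0") auto
    qed
    then show ?thesis by simp
  next
    case False
    then have "(\<Sum>j\<in>UNIV. (Ubar M P X k i j \<omega>)\<^sup>2)
        = (\<Sum>j\<in>UNIV. (of_bool (Xbar M X k \<omega> = j) - P (row_of M k) i j)\<^sup>2)"
      using assms by (simp add: Ubar_form)
    also have "\<dots> \<le> 2" using mk unfolding markov_chain_row_def by (intro sq_bound) auto
    finally show ?thesis .
  qed
  then show ?thesis by simp
qed

end

theorem lemma6p5:
  fixes Ps :: "'w measure"
    and M T :: nat
    and X :: "nat \<Rightarrow> nat \<Rightarrow> 'w \<Rightarrow> 'a::finite"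
    and P :: "nat \<Rightarrow> 'a \<Rightarrow> 'a \<Rightarrow> real"
    and i :: 'a
  assumes "prob_space Ps"
    and "M \<ge> 1" and "T \<ge> 1"
    and meas: "\<forall>m\<in>{1..M}. \<forall>t\<le>T. X m t \<in> measurable Ps (count_space UNIV)"
    and indep: "prob_space.indep_vars Ps (\<lambda>_. Pi\<^sub>M {..T} (\<lambda>_. count_space UNIV))
                  (\<lambda>m \<omega>. \<lambda>t\<in>{..T}. X m t \<omega>) {1..M}"
    and markov: "\<forall>m\<in>{1..M}. markov_chain_row Ps (X m) (P m) T"
  shows "vec_martingale_upto Ps (Fk Ps M X) (\<lambda>k j. Vbar M P X k i j) (M * (T + 1))
         \<and> (\<forall>k\<in>{1..M * (T + 1)}.
              AE \<omega> in Ps. sqrt (\<Sum>j\<in>UNIV. (Ubar M P X k i j \<omega>)\<^sup>2) \<le> sqrt 2)"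
proof -
  interpret lsetup Ps M T X P
    using assms by (simp add: lsetup_def lsetup_axioms_def)
  show ?thesis
    unfolding vec_martingale_upto_def using martingale bound by (auto intro!: AE_I2)
qed


end
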